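(* Let $\underline M=(M,\lambda,\mu)$ be a free metabolic extended quadratic form over an abelian group $Q$ and $L\le M$ a lagrangian. Then there is an isomorphism $J:\underline M\to-\underline M$ with $J|_L=\mathrm{id}_L$.
   Context: Extended quadratic form over $Q$: $(M,\lambda,\mu)$, $\lambda$ symmetric bilinear to $\mathbb Z$, $\mu:M\to Q$ homomorphism; isomorphisms preserve $\lambda$ and $\mu$. $-\underline M=(M,-\lambda,-\mu)$. Free: $M$ free. Metabolic: $\mathrm{ad}\lambda:M\to\mathrm{Hom}(M,\mathbb Z)$ is an isomorphism (free case) and there is a lagrangian, i.e. a direct summand $L$ of half rank with $\lambda|_{L\times L}=0$ and $\mu|_L=0$. *)

theory Defs
  imports Main "HOL-Library.Function_Algebras"
begin

text \<open>A free abelian group of finite rank n is modelled (up to isomorphism) as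
  the group Z^n, realised as integer sequences vanishing from index n on.\<close>

definition Zn :: "nat \<Rightarrow> (nat \<Rightarrow> int) set" where
  "Zn n = {v. \<forall>i\<ge>n. v i = 0}"

definition zsmul :: "int \<Rightarrow> (nat \<Rightarrow> int) \<Rightarrow> (nat \<Rightarrow> int)" where
  "zsmul c v = (\<lambda>i. c * v i)"

definition additive_on :: "(nat \<Rightarrow> int) set \<Rightarrow> ((nat \<Rightarrow> int) \<Rightarrow> 'b::ab_group_add) \<Rightarrow> bool" where
  "additive_on M f \<longleftrightarrow> (\<forall>x\<in>M. \<forall>y\<in>M. f (x + y) = f x + f y)"

definition subgroup_of :: "(nat \<Rightarrow> int) set \<Rightarrow> (nat \<Rightarrow> int) set \<Rightarrow> bool" where
  "subgroup_of L M \<longleftrightarrow> L \<subseteq> M \<and> 0 \<in> L \<and> (\<forall>x\<in>L. \<forall>y\<in>L. x + y \<in> L \<and> - x \<in> L)"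

definition ext_quad_form :: "nat \<Rightarrow> ((nat \<Rightarrow> int) \<Rightarrow> (nat \<Rightarrow> int) \<Rightarrow> int) \<Rightarrow> ((nat \<Rightarrow> int) \<Rightarrow> 'q::ab_group_add) \<Rightarrow> bool" where
  "ext_quad_form n lam mu \<longleftrightarrow>
     (\<forall>x\<in>Zn n. \<forall>y\<in>Zn n. lam x y = lam y x) \<and>
     (\<forall>y\<in>Zn n. additive_on (Zn n) (\<lambda>x. lam x y)) \<and>
     additive_on (Zn n) mu"

text \<open>ad lambda : M \<rightarrow> Hom(M,Z) is an isomorphism: every homomorphism M \<rightarrow> Z is
  lambda(x,-) for exactly one x in M.\<close>
definition ad_iso :: "nat \<Rightarrow> ((nat \<Rightarrow> int) \<Rightarrow> (nat \<Rightarrow> int) \<Rightarrow> int) \<Rightarrow> bool" where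
  "ad_iso n lam \<longleftrightarrow>
     (\<forall>f. additive_on (Zn n) f \<longrightarrow> (\<exists>!x\<in>Zn n. \<forall>y\<in>Zn n. lam x y = f y))"

definition zbasis :: "(nat \<Rightarrow> int) set \<Rightarrow> (nat \<Rightarrow> int) set \<Rightarrow> bool" where
  "zbasis B L \<longleftrightarrow> finite B \<and> B \<subseteq> L \<and>
     (\<forall>c. (\<Sum>b\<in>B. zsmul (c b) b) = 0 \<longrightarrow> (\<forall>b\<in>B. c b = 0)) \<and>
     (\<forall>x\<in>L. \<exists>c. x = (\<Sum>b\<in>B. zsmul (c b) b))"

definition direct_summand :: "nat \<Rightarrow> (nat \<Rightarrow> int) set \<Rightarrow> bool" where
  "direct_summand n L \<longleftrightarrow> subgroup_of L (Zn n) \<and>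
     (\<exists>K. subgroup_of K (Zn n) \<and> L \<inter> K = {0} \<and>
          (\<forall>x\<in>Zn n. \<exists>l\<in>L. \<exists>k\<in>K. x = l + k))"

definition lagrangian :: "nat \<Rightarrow> ((nat \<Rightarrow> int) \<Rightarrow> (nat \<Rightarrow> int) \<Rightarrow> int) \<Rightarrow> ((nat \<Rightarrow> int) \<Rightarrow> 'q::ab_group_add) \<Rightarrow> (nat \<Rightarrow> int) set \<Rightarrow> bool" where
  "lagrangian n lam mu L \<longleftrightarrow> direct_summand n L \<and>
     (\<exists>B. zbasis B L \<and> 2 * card B = n) \<and>
     (\<forall>x\<in>L. \<forall>y\<in>L. lam x y = 0) \<and> (\<forall>x\<in>L. mu x = 0)"

definition metabolic :: "nat \<Rightarrow> ((nat \<Rightarrow> int) \<Rightarrow> (nat \<Rightarrow> int) \<Rightarrow> int) \<Rightarrow> ((nat \<Rightarrow> int) \<Rightarrow> 'q::ab_group_add) \<Rightarrow> bool" where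
  "metabolic n lam mu \<longleftrightarrow> ad_iso n lam \<and> (\<exists>L. lagrangian n lam mu L)"

definition eqf_iso :: "nat \<Rightarrow> ((nat \<Rightarrow> int) \<Rightarrow> (nat \<Rightarrow> int) \<Rightarrow> int) \<Rightarrow> ((nat \<Rightarrow> int) \<Rightarrow> 'q::ab_group_add)
    \<Rightarrow> ((nat \<Rightarrow> int) \<Rightarrow> (nat \<Rightarrow> int) \<Rightarrow> int) \<Rightarrow> ((nat \<Rightarrow> int) \<Rightarrow> 'q) \<Rightarrow> ((nat \<Rightarrow> int) \<Rightarrow> (nat \<Rightarrow> int)) \<Rightarrow> bool" where
  "eqf_iso n lam mu lam' mu' J \<longleftrightarrow>
     bij_betw J (Zn n) (Zn n) \<and> additive_on (Zn n) J \<and>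
     (\<forall>x\<in>Zn n. \<forall>y\<in>Zn n. lam' (J x) (J y) = lam x y) \<and>
     (\<forall>x\<in>Zn n. mu' (J x) = mu x)"

end

theory Submission
  imports Defs
begin

declare plus_fun_apply[simp del] zero_fun_apply[simp del]
lemma zsmul_app: "zsmul c v i = c * v i"
  by (simp add: zsmul_def)
lemmas fapp = plus_fun_apply zero_fun_apply zsmul_app

lemma sum_fun_app: "(sum f A) x = sum (\<lambda>a. f a x) A"
  by (induct A rule: infinite_finite_induct) (auto simp: fapp)


lemma Zn_0[simp]: "0 \<in> Zn n" by (simp add: Zn_def fapp)
lemma Zn_add[simp]: "x \<in> Zn n \<Longrightarrow> y \<in> Zn n \<Longrightarrow> x + y \<in> Zn n" by (simp add: Zn_def fapp)
lemma Zn_diff[simp]: "x \<in> Zn n \<Longrightarrow> y \<in> Zn n \<Longrightarrow> x - y \<in> Zn n" by (simp add: Zn_def fapp)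
lemma Zn_uminus[simp]: "x \<in> Zn n \<Longrightarrow> - x \<in> Zn n" by (simp add: Zn_def fapp)
lemma Zn_zsmul[simp]: "x \<in> Zn n \<Longrightarrow> zsmul c x \<in> Zn n" by (simp add: Zn_def fapp)
lemma Zn_sum[simp]: "(\<And>a. a \<in> A \<Longrightarrow> w a \<in> Zn n) \<Longrightarrow> sum w A \<in> Zn n"
  by (simp add: Zn_def sum_fun_app fapp)

lemma dep_core:
  assumes "finite I" "card I > n" "\<forall>i\<in>I. v i \<in> Zn n"
  shows "\<exists>c. (\<forall>t. (\<Sum>i\<in>I. c i * v i t) = 0) \<and> (\<exists>i\<in>I. c i \<noteq> 0)"
  using assms
proof (induction n arbitrary: I v)
  case 0
  then obtain i0 where i0: "i0 \<in> I" by fastforce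
  have "\<forall>i\<in>I. \<forall>t. v i t = 0" using 0 by (simp add: Zn_def fapp)
  then show ?case using i0 by (intro exI[of _ "\<lambda>i. 1"]) auto
next
  case (Suc n)
  show ?case
  proof (cases "\<forall>i\<in>I. v i n = 0")
    case True
    then have "\<forall>i\<in>I. v i \<in> Zn n" using Suc.prems(3)
      by (auto simp: Zn_def) (metis le_eq_less_or_eq Suc_le_eq)
    then show ?thesis using Suc.IH[of I v] Suc.prems by auto
  next
    case False
    then obtain j where j: "j \<in> I" "v j n \<noteq> 0" by auto
    define a where "a = v j n"
    define w where "w i = (\<lambda>t. a * v i t - v i n * v j t)" for i
    have wZ: "\<forall>i\<in>I - {j}. w i \<in> Zn n"
    proof
      fix i assume i: "i \<in> I - {j}"
      have "\<forall>t\<ge>Suc n. v i t = 0 \<and> v j t = 0" using Suc.prems(3) i j by (auto simp: Zn_def)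
      show "w i \<in> Zn n" unfolding Zn_def
      proof (intro CollectI allI impI)
        fix t assume "n \<le> t"
        then consider "t = n" | "t \<ge> Suc n" by linarith
        then show "w i t = 0"
          using \<open>\<forall>t\<ge>Suc n. v i t = 0 \<and> v j t = 0\<close> by cases (auto simp: w_def a_def)
      qed
    qed
    have "card (I - {j}) > n" using Suc.prems j by simp
    then obtain c' where c': "\<forall>t. (\<Sum>i\<in>I-{j}. c' i * w i t) = 0" "\<exists>i\<in>I-{j}. c' i \<noteq> 0"
      using Suc.IH[of "I - {j}" w] Suc.prems wZ by auto
    define c where "c i = (if i = j then - (\<Sum>i\<in>I-{j}. c' i * v i n) else c' i * a)" for i
    have "(\<Sum>i\<in>I. c i * v i t) = 0" for t
    proof -
      have "(\<Sum>i\<in>I. c i * v i t) = c j * v j t + (\<Sum>i\<in>I-{j}. c i * v i t)"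
        using j Suc.prems(1) by (simp add: sum.remove)
      also have "\<dots> = (\<Sum>i\<in>I-{j}. c' i * w i t)"
        by (simp add: c_def w_def sum_distrib_left sum_distrib_right sum_subtractf[symmetric] algebra_simps)
      finally show ?thesis using c' by simp
    qed
    moreover have "\<exists>i\<in>I. c i \<noteq> 0" using c' j by (auto simp: c_def a_def)
    ultimately show ?thesis by blast
  qed
qed

lemma dep_lemma:
  assumes "finite I" "card I > n" "\<forall>i\<in>I. v i \<in> Zn n"
  shows "\<exists>c. (\<Sum>i\<in>I. zsmul (c i) (v i)) = 0 \<and> (\<exists>i\<in>I. c i \<noteq> 0)"
proof -
  obtain c where "\<forall>t. (\<Sum>i\<in>I. c i * v i t) = 0" "\<exists>i\<in>I. c i \<noteq> 0"
    using dep_core[OF assms] by blast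
  then show ?thesis by (intro exI[of _ c]) (simp add: fapp fun_eq_iff sum_fun_app)
qed

lemma zsmul_add: "zsmul (a + b) x = zsmul a x + zsmul b x"
  by (simp add: fapp fun_eq_iff algebra_simps)
lemma zsmul_neg: "zsmul (- a) x = - zsmul a x"
  by (simp add: fapp fun_eq_iff)
lemma zsmul_0[simp]: "zsmul 0 x = 0" "zsmul c 0 = 0" by (simp_all add: fapp fun_eq_iff)
lemma zsmul_1[simp]: "zsmul 1 x = x" by (simp add: fapp fun_eq_iff)

lemma addf_0: "additive_on (Zn n) f \<Longrightarrow> f 0 = 0"
  unfolding additive_on_def by (metis Zn_0 add.right_neutral add_cancel_right_right)
lemma addf_plus: "additive_on (Zn n) f \<Longrightarrow> x \<in> Zn n \<Longrightarrow> y \<in> Zn n \<Longrightarrow> f (x + y) = f x + f y"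
  unfolding additive_on_def by blast
lemma addf_neg: "additive_on (Zn n) f \<Longrightarrow> x \<in> Zn n \<Longrightarrow> f (- x) = - f x"
  using addf_plus[of n f x "-x"] addf_0[of n f] by (simp add: eq_neg_iff_add_eq_0 add.commute)
lemma addf_diff: "additive_on (Zn n) f \<Longrightarrow> x \<in> Zn n \<Longrightarrow> y \<in> Zn n \<Longrightarrow> f (x - y) = f x - f y"
  using addf_plus[of n f x "-y"] addf_neg[of n f y] by simp
lemma addf_zsmul:
  fixes f :: "(nat \<Rightarrow> int) \<Rightarrow> int"
  assumes "additive_on (Zn n) f" "x \<in> Zn n"
  shows "f (zsmul c x) = c * f x"
proof -
  have nat: "f (zsmul (int m) x) = int m * f x" for m
  proof (induction m)
    case 0
    have "zsmul (int 0) x = 0" by (simp add: fapp fun_eq_iff)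
    then show ?case using addf_0[OF assms(1)] by (metis mult_zero_left of_nat_0)
  next
    case (Suc m)
    have "zsmul (int (Suc m)) x = zsmul (int m) x + x" by (simp add: fapp fun_eq_iff algebra_simps)
    then show ?case using Suc addf_plus[OF assms(1), of "zsmul (int m) x" x] assms(2)
      by (simp add: algebra_simps)
  qed
  show ?thesis
  proof (cases "c \<ge> 0")
    case True then show ?thesis using nat[of "nat c"] by simp
  next
    case False
    then have "c = - int (nat (- c))" by simp
    then show ?thesis using nat[of "nat (-c)"] addf_neg[OF assms(1), of "zsmul (int (nat (-c))) x"] assms(2)
      by (metis Zn_zsmul mult_minus_left zsmul_neg)
  qed
qed
lemma addf_sum:
  assumes "additive_on (Zn n) f" "\<And>a. a \<in> A \<Longrightarrow> w a \<in> Zn n"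
  shows "f (sum w A) = (\<Sum>a\<in>A. f (w a))"
  using assms(2)
proof (induct A rule: infinite_finite_induct)
  case (infinite A) then show ?case using addf_0[OF assms(1)] by (metis sum.infinite)
next
  case empty then show ?case using addf_0[OF assms(1)] by (metis sum.empty)
next
  case (insert a A)
  have "w a \<in> Zn n" "sum w A \<in> Zn n" using insert by auto
  then have "f (sum w (insert a A)) = f (w a) + f (sum w A)"
    using addf_plus[OF assms(1), of "w a" "sum w A"] insert(1,2) by (metis sum.insert)
  then show ?case using insert by simp
qed

lemma sg_sub: "subgroup_of S (Zn n) \<Longrightarrow> x \<in> S \<Longrightarrow> x \<in> Zn n"
  unfolding subgroup_of_def by blast
lemma sg_0: "subgroup_of S M \<Longrightarrow> 0 \<in> S"
  unfolding subgroup_of_def by blast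
lemma sg_add: "subgroup_of S M \<Longrightarrow> x \<in> S \<Longrightarrow> y \<in> S \<Longrightarrow> x + y \<in> S"
  unfolding subgroup_of_def by blast
lemma sg_neg: "subgroup_of S M \<Longrightarrow> x \<in> S \<Longrightarrow> - x \<in> S"
  unfolding subgroup_of_def by blast
lemma sg_diff: "subgroup_of S M \<Longrightarrow> x \<in> S \<Longrightarrow> y \<in> S \<Longrightarrow> x - y \<in> S"
  using sg_add[of S M x "-y"] sg_neg[of S M y] by simp
lemma sg_zsmul:
  assumes "subgroup_of S M" "x \<in> S" shows "zsmul c x \<in> S"
proof -
  have nat: "zsmul (int m) x \<in> S" for m
  proof (induction m)
    case 0 then show ?case using sg_0[OF assms(1)] by (metis of_nat_0 zsmul_0(1))
  next
    case (Suc m)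
    have "zsmul (int (Suc m)) x = zsmul (int m) x + x" by (simp add: fapp fun_eq_iff algebra_simps)
    then show ?case using Suc sg_add[OF assms(1)] assms(2) by metis
  qed
  show ?thesis
  proof (cases "c \<ge> 0")
    case True then show ?thesis using nat[of "nat c"] by simp
  next
    case False
    then have "c = - int (nat (- c))" by simp
    then show ?thesis using nat[of "nat (-c)"] sg_neg[OF assms(1)] by (metis zsmul_neg)
  qed
qed
lemma sg_sum:
  assumes "subgroup_of S M" "\<And>a. a \<in> A \<Longrightarrow> w a \<in> S"
  shows "sum w A \<in> S"
  using assms(2)
  by (induct A rule: infinite_finite_induct) (auto simp: sg_0[OF assms(1)] sg_add[OF assms(1)])


lemma sum_zsmul_diff: "(\<Sum>b\<in>B. zsmul (c b - d b) (w b)) = (\<Sum>b\<in>B. zsmul (c b) (w b)) - (\<Sum>b\<in>B. zsmul (d b) (w b))"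
  by (simp add: fapp fun_eq_iff sum_fun_app sum_subtractf[symmetric] algebra_simps)
lemma sum_zsmul_add: "(\<Sum>b\<in>B. zsmul (c b + d b) (w b)) = (\<Sum>b\<in>B. zsmul (c b) (w b)) + (\<Sum>b\<in>B. zsmul (d b) (w b))"
  by (simp add: fapp fun_eq_iff sum_fun_app sum.distrib[symmetric] algebra_simps)

locale mt =
  fixes n :: nat and lam :: "(nat \<Rightarrow> int) \<Rightarrow> (nat \<Rightarrow> int) \<Rightarrow> int"
    and mu :: "(nat \<Rightarrow> int) \<Rightarrow> 'q::ab_group_add"
    and L K B :: "(nat \<Rightarrow> int) set"
  assumes sym: "\<And>x y. x \<in> Zn n \<Longrightarrow> y \<in> Zn n \<Longrightarrow> lam x y = lam y x"
    and addl: "\<And>y. y \<in> Zn n \<Longrightarrow> additive_on (Zn n) (\<lambda>x. lam x y)"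
    and addmu: "additive_on (Zn n) mu"
    and adiso: "ad_iso n lam"
    and Lsub: "subgroup_of L (Zn n)" and Ksub: "subgroup_of K (Zn n)"
    and LK: "L \<inter> K = {0}"
    and decomp: "\<And>x. x \<in> Zn n \<Longrightarrow> \<exists>l\<in>L. \<exists>k\<in>K. x = l + k"
    and basis: "zbasis B L" and cardB: "2 * card B = n"
    and lamL: "\<And>x y. x \<in> L \<Longrightarrow> y \<in> L \<Longrightarrow> lam x y = 0"
    and muL: "\<And>x. x \<in> L \<Longrightarrow> mu x = 0"
begin

lemma LZ[simp]: "x \<in> L \<Longrightarrow> x \<in> Zn n" using sg_sub[OF Lsub] .
lemma KZ[simp]: "x \<in> K \<Longrightarrow> x \<in> Zn n" using sg_sub[OF Ksub] .

lemma addr: "x \<in> Zn n \<Longrightarrow> additive_on (Zn n) (\<lambda>y. lam x y)"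
  using addl[of x] sym unfolding additive_on_def by simp

lemma lam_add1[simp]: "x \<in> Zn n \<Longrightarrow> y \<in> Zn n \<Longrightarrow> z \<in> Zn n \<Longrightarrow> lam (x + y) z = lam x z + lam y z"
  using addf_plus[OF addl] by blast
lemma lam_add2[simp]: "x \<in> Zn n \<Longrightarrow> y \<in> Zn n \<Longrightarrow> z \<in> Zn n \<Longrightarrow> lam z (x + y) = lam z x + lam z y"
  using addf_plus[OF addr] by blast
lemma lam_diff1[simp]: "x \<in> Zn n \<Longrightarrow> y \<in> Zn n \<Longrightarrow> z \<in> Zn n \<Longrightarrow> lam (x - y) z = lam x z - lam y z"
  using addf_diff[OF addl] by blast
lemma lam_diff2[simp]: "x \<in> Zn n \<Longrightarrow> y \<in> Zn n \<Longrightarrow> z \<in> Zn n \<Longrightarrow> lam z (x - y) = lam z x - lam z y"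
  using addf_diff[OF addr] by blast
lemma lam_neg1[simp]: "x \<in> Zn n \<Longrightarrow> z \<in> Zn n \<Longrightarrow> lam (- x) z = - lam x z"
  using addf_neg[OF addl] by blast
lemma lam_neg2[simp]: "x \<in> Zn n \<Longrightarrow> z \<in> Zn n \<Longrightarrow> lam z (- x) = - lam z x"
  using addf_neg[OF addr] by blast
lemma lam_01[simp]: "z \<in> Zn n \<Longrightarrow> lam 0 z = 0"
  using addf_0[OF addl] by blast
lemma lam_02[simp]: "z \<in> Zn n \<Longrightarrow> lam z 0 = 0"
  using addf_0[OF addr] by blast

definition p where "p x = (SOME l. l \<in> L \<and> x - l \<in> K)"
definition q where "q x = x - p x"

lemma pq: "x \<in> Zn n \<Longrightarrow> p x \<in> L \<and> q x \<in> K"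
proof -
  assume "x \<in> Zn n"
  then obtain l k where "l \<in> L" "k \<in> K" "x = l + k" using decomp by blast
  then have "\<exists>l. l \<in> L \<and> x - l \<in> K" by (intro exI[of _ l]) simp
  then show ?thesis unfolding q_def p_def by (rule someI_ex)
qed
lemma pL[simp]: "x \<in> Zn n \<Longrightarrow> p x \<in> L" using pq by blast
lemma qK[simp]: "x \<in> Zn n \<Longrightarrow> q x \<in> K" using pq by blast
lemma pZ[simp]: "x \<in> Zn n \<Longrightarrow> p x \<in> Zn n" by simp
lemma qZ[simp]: "x \<in> Zn n \<Longrightarrow> q x \<in> Zn n" by simp
lemma pq_sum: "x = p x + q x" by (simp add: q_def)

lemma LK0: "x \<in> L \<Longrightarrow> x \<in> K \<Longrightarrow> x = 0" using LK by blast

lemma p_uniq: "l \<in> L \<Longrightarrow> k \<in> K \<Longrightarrow> p (l + k) = l"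
proof -
  assume l: "l \<in> L" and k: "k \<in> K"
  let ?x = "l + k"
  have x: "?x \<in> Zn n" using l k by simp
  have "p ?x - l \<in> L" using sg_diff[OF Lsub] l x by simp
  moreover have "p ?x - l = k - q ?x" by (simp add: q_def algebra_simps)
  moreover have "k - q ?x \<in> K" using sg_diff[OF Ksub] k x by simp
  ultimately show ?thesis using LK0 by fastforce
qed
lemma p_uniq': "x = l + k \<Longrightarrow> l \<in> L \<Longrightarrow> k \<in> K \<Longrightarrow> p x = l" using p_uniq by blast
lemma q_uniq': "x = l + k \<Longrightarrow> l \<in> L \<Longrightarrow> k \<in> K \<Longrightarrow> q x = k" using p_uniq by (simp add: q_def)

lemma p_add: "x \<in> Zn n \<Longrightarrow> y \<in> Zn n \<Longrightarrow> p (x + y) = p x + p y"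
proof -
  assume "x \<in> Zn n" "y \<in> Zn n"
  have "x + y = (p x + p y) + (q x + q y)" by (simp add: q_def algebra_simps)
  then show ?thesis by (rule p_uniq') (auto intro: sg_add[OF Lsub] sg_add[OF Ksub] simp: \<open>x \<in> Zn n\<close> \<open>y \<in> Zn n\<close>)
qed
lemma q_add: "x \<in> Zn n \<Longrightarrow> y \<in> Zn n \<Longrightarrow> q (x + y) = q x + q y"
  using p_add by (simp add: q_def algebra_simps)
lemma pq_L: "l \<in> L \<Longrightarrow> p l = l \<and> q l = 0"
  using p_uniq'[of l l 0] q_uniq'[of l l 0] sg_0[OF Ksub] by simp
lemma pq_K: "k \<in> K \<Longrightarrow> p k = 0 \<and> q k = k"
  using p_uniq'[of k 0 k] q_uniq'[of k 0 k] sg_0[OF Lsub] by simp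

lemma finB: "finite B" and BL: "B \<subseteq> L"
  and indep: "\<And>c. (\<Sum>b\<in>B. zsmul (c b) b) = 0 \<Longrightarrow> \<forall>b\<in>B. c b = 0"
  and span: "\<And>x. x \<in> L \<Longrightarrow> \<exists>c. x = (\<Sum>b\<in>B. zsmul (c b) b)"
  using basis unfolding zbasis_def by blast+

definition cf where "cf y = (SOME c. y = (\<Sum>b\<in>B. zsmul (c b) b))"

lemma cf_rep: "y \<in> L \<Longrightarrow> y = (\<Sum>b\<in>B. zsmul (cf y b) b)"
  unfolding cf_def using span by (rule someI_ex)
lemma cf_uniq: "y \<in> L \<Longrightarrow> y = (\<Sum>b\<in>B. zsmul (c b) b) \<Longrightarrow> b \<in> B \<Longrightarrow> cf y b = c b"
proof -
  assume y: "y \<in> L" and c: "y = (\<Sum>b\<in>B. zsmul (c b) b)" and b: "b \<in> B"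
  have "(\<Sum>b\<in>B. zsmul (c b - cf y b) b) = 0"
    unfolding sum_zsmul_diff using c cf_rep[OF y] by (metis diff_self)
  then show ?thesis using indep b by fastforce
qed
lemma cf_add: "y \<in> L \<Longrightarrow> z \<in> L \<Longrightarrow> b \<in> B \<Longrightarrow> cf (y + z) b = cf y b + cf z b"
proof -
  assume y: "y \<in> L" and z: "z \<in> L" and b: "b \<in> B"
  have yz: "y + z \<in> L" using sg_add[OF Lsub] y z .
  have "y + z = (\<Sum>b\<in>B. zsmul (cf y b + cf z b) b)"
    unfolding sum_zsmul_add using cf_rep[OF y] cf_rep[OF z] by metis
  from cf_uniq[OF yz this b] show ?thesis .
qed
lemma cf_basis: "b' \<in> B \<Longrightarrow> b \<in> B \<Longrightarrow> cf b' b = (if b = b' then 1 else 0)"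
proof -
  assume b': "b' \<in> B" and b: "b \<in> B"
  have "(\<Sum>b\<in>B. zsmul (if b = b' then 1 else 0) b) = (\<Sum>b\<in>B. if b = b' then b else 0)"
    by (rule sum.cong) auto
  also have "\<dots> = b'" using b' finB by (simp add: sum.delta')
  finally have "b' = (\<Sum>b\<in>B. zsmul (if b = b' then 1 else 0) b)" by simp
  from cf_uniq[OF _ this b] show ?thesis using b' BL by blast
qed

lemma perpK:
  assumes k: "k \<in> K" "k \<noteq> 0" "\<forall>l\<in>L. lam k l = 0"
  shows False
proof -
  have kZ: "k \<in> Zn n" using k by simp
  have BZ: "b \<in> B \<Longrightarrow> b \<in> Zn n" for b using BL by auto
  define f where "f b0 y = cf (p y) b0" for b0 y
  have fadd: "additive_on (Zn n) (f b0)" if "b0 \<in> B" for b0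
    unfolding additive_on_def f_def using p_add cf_add pL that by simp
  define d where "d b0 = (SOME x. x \<in> Zn n \<and> (\<forall>y\<in>Zn n. lam x y = f b0 y))" for b0
  have d: "d b0 \<in> Zn n \<and> (\<forall>y\<in>Zn n. lam (d b0) y = f b0 y)" if "b0 \<in> B" for b0
  proof -
    have "\<exists>!x. x \<in> Zn n \<and> (\<forall>y\<in>Zn n. lam x y = f b0 y)"
      using adiso fadd[OF that] unfolding ad_iso_def by blast
    then have "\<exists>x. x \<in> Zn n \<and> (\<forall>y\<in>Zn n. lam x y = f b0 y)" by blast
    then show ?thesis unfolding d_def by (rule someI_ex)
  qed
  define e where "e b0 = q (d b0)" for b0
  have eK: "e b0 \<in> K" if "b0 \<in> B" for b0 using d[OF that] by (simp add: e_def)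
  have elam: "lam (e b0) b' = (if b0 = b' then 1 else 0)" if "b0 \<in> B" "b' \<in> B" for b0 b'
  proof -
    have dZ: "d b0 \<in> Zn n" using d[OF that(1)] by blast
    have "lam (e b0) b' = lam (d b0) b' - lam (p (d b0)) b'"
      unfolding e_def q_def using dZ BZ[OF that(2)] by simp
    also have "lam (p (d b0)) b' = 0" using lamL dZ BL that(2) by auto
    also have "lam (d b0) b' = cf (p b') b0" using d[OF that(1)] BZ[OF that(2)] by (simp add: f_def)
    also have "p b' = b'" using pq_L BL that(2) by auto
    finally show ?thesis using cf_basis[OF that(2,1)] by simp
  qed
  define I :: "((nat \<Rightarrow> int) + (nat \<Rightarrow> int) option) set"
    where "I = Inl ` B \<union> (Inr ` Some ` B \<union> {Inr None})"
  define v where "v i = (case i of Inl b \<Rightarrow> b | Inr None \<Rightarrow> k | Inr (Some b) \<Rightarrow> e b)" for i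
  have finI: "finite I" unfolding I_def using finB by simp
  have c1: "card (Inl ` B :: ((nat \<Rightarrow> int) + (nat \<Rightarrow> int) option) set) = card B"
    by (rule card_image) (simp add: inj_on_def)
  have c2: "card (Inr ` Some ` B :: ((nat \<Rightarrow> int) + (nat \<Rightarrow> int) option) set) = card B"
    by (subst card_image) (auto simp: inj_on_def card_image)
  have "card I = card B + (card B + 1)"
    unfolding I_def using finB c1 c2
    by (subst card_Un_disjoint, simp, simp, fastforce, subst card_Un_disjoint, auto)
  then have cardI: "card I > n" using cardB by simp
  have vZ: "\<forall>i\<in>I. v i \<in> Zn n" unfolding I_def v_def using BZ eK kZ by auto
  obtain c where c: "(\<Sum>i\<in>I. zsmul (c i) (v i)) = 0" "\<exists>i\<in>I. c i \<noteq> 0"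
    using dep_lemma[OF finI cardI vZ] by blast
  define S1 where "S1 = (\<Sum>b\<in>B. zsmul (c (Inl b)) b)"
  define S2 where "S2 = (\<Sum>b\<in>B. zsmul (c (Inr (Some b))) (e b))"
  define S3 where "S3 = zsmul (c (Inr None)) k"
  have "(\<Sum>i\<in>I. zsmul (c i) (v i)) = S1 + (S2 + S3)"
  proof -
    have "(\<Sum>i\<in>I. zsmul (c i) (v i)) = (\<Sum>i\<in>Inl ` B. zsmul (c i) (v i)) + ((\<Sum>i\<in>Inr ` Some ` B. zsmul (c i) (v i)) + zsmul (c (Inr None)) (v (Inr None)))"
      unfolding I_def using finB by (subst sum.union_disjoint, simp, simp, fastforce, subst sum.union_disjoint, auto)
    also have "(\<Sum>i\<in>Inl ` B. zsmul (c i) (v i)) = S1"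
      unfolding S1_def by (subst sum.reindex) (auto simp: inj_on_def v_def)
    also have "(\<Sum>i\<in>Inr ` Some ` B. zsmul (c i) (v i)) = S2"
      unfolding S2_def by (subst sum.reindex, simp add: inj_on_def, subst sum.reindex) (auto simp: inj_on_def v_def)
    finally show ?thesis by (simp add: S3_def v_def)
  qed
  then have sum0: "S1 + (S2 + S3) = 0" using c(1) by simp
  have S1L: "S1 \<in> L" unfolding S1_def using BL by (intro sg_sum[OF Lsub] sg_zsmul[OF Lsub]) auto
  have S2Z: "S2 \<in> Zn n" unfolding S2_def using eK by (intro Zn_sum Zn_zsmul) auto
  have S3K: "S3 \<in> K" unfolding S3_def using k by (intro sg_zsmul[OF Ksub])
  have cS: "c (Inr (Some b')) = 0" if b': "b' \<in> B" for b'
  proof -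
    have b'Z: "b' \<in> Zn n" using BZ b' .
    have "lam S1 b' = (\<Sum>b\<in>B. lam (zsmul (c (Inl b)) b) b')"
      unfolding S1_def by (rule addf_sum[OF addl[OF b'Z]]) (simp add: BZ)
    also have "\<dots> = (\<Sum>b\<in>B. c (Inl b) * lam b b')"
      by (rule sum.cong) (auto simp: addf_zsmul[OF addl[OF b'Z]] BZ)
    also have "\<dots> = 0"
    proof (intro sum.neutral ballI)
      fix b assume "b \<in> B"
      then have "lam b b' = 0" using lamL BL b' by blast
      then show "c (Inl b) * lam b b' = 0" by simp
    qed
    finally have l1: "lam S1 b' = 0" .
    have "lam S2 b' = (\<Sum>b\<in>B. lam (zsmul (c (Inr (Some b))) (e b)) b')"
      unfolding S2_def by (rule addf_sum[OF addl[OF b'Z]]) (simp add: eK)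
    also have "\<dots> = (\<Sum>b\<in>B. c (Inr (Some b)) * (if b = b' then 1 else 0))"
      by (rule sum.cong) (auto simp: addf_zsmul[OF addl[OF b'Z]] eK elam b' simp del: mult_eq_0_iff)
    also have "\<dots> = c (Inr (Some b'))" using b' finB by (simp add: if_distrib sum.delta' cong: if_cong)
    finally have l2: "lam S2 b' = c (Inr (Some b'))" .
    have l3: "lam S3 b' = 0" unfolding S3_def using addf_zsmul[OF addl[OF b'Z] kZ] k(3) b' BL by auto
    have "lam (S1 + (S2 + S3)) b' = 0" using sum0 b'Z by simp
    then show ?thesis using l1 l2 l3 S1L S2Z S3K b'Z by simp
  qed
  have "S2 = 0" unfolding S2_def using cS by simp
  then have "S1 = - S3" using sum0 by (simp add: eq_neg_iff_add_eq_0)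
  then have "S1 \<in> K" using sg_neg[OF Ksub S3K] by simp
  then have S10: "S1 = 0" using S1L LK0 by blast
  then have cL: "\<forall>b\<in>B. c (Inl b) = 0" using indep[of "\<lambda>b. c (Inl b)"] unfolding S1_def by simp
  have "S3 = 0" using S10 \<open>S1 = - S3\<close> by simp
  moreover obtain t where "k t \<noteq> 0" using k(2) by (auto simp: fun_eq_iff fapp)
  ultimately have cN: "c (Inr None) = 0" unfolding S3_def by (metis zsmul_app fapp(2) mult_eq_0_iff)
  show False using c(2) cL cS cN unfolding I_def by auto
qed

lemma perp: "x \<in> Zn n \<Longrightarrow> \<forall>l\<in>L. lam x l = 0 \<Longrightarrow> x \<in> L"
proof -
  assume x: "x \<in> Zn n" and h: "\<forall>l\<in>L. lam x l = 0"
  have "\<forall>l\<in>L. lam (q x) l = 0" using h lamL x by (simp add: q_def)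
  then have "q x = 0" using perpK[of "q x"] x by auto
  then show ?thesis using x pL[OF x] by (simp add: q_def)
qed

definition G where "G x = (THE z. z \<in> Zn n \<and> (\<forall>y\<in>Zn n. lam z y = lam (q x) (q y)))"

lemma G_ex1: "x \<in> Zn n \<Longrightarrow> \<exists>!z. z \<in> Zn n \<and> (\<forall>y\<in>Zn n. lam z y = lam (q x) (q y))"
proof -
  assume x: "x \<in> Zn n"
  have "additive_on (Zn n) (\<lambda>y. lam (q x) (q y))"
    unfolding additive_on_def using x by (simp add: q_add)
  then show ?thesis using adiso unfolding ad_iso_def by blast
qed
lemma G_prop: "x \<in> Zn n \<Longrightarrow> G x \<in> Zn n \<and> (\<forall>y\<in>Zn n. lam (G x) y = lam (q x) (q y))"
  unfolding G_def by (rule theI'[OF G_ex1])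
lemma G_uniq: "x \<in> Zn n \<Longrightarrow> z \<in> Zn n \<Longrightarrow> \<forall>y\<in>Zn n. lam z y = lam (q x) (q y) \<Longrightarrow> G x = z"
  unfolding G_def by (rule the1_equality[OF G_ex1]) auto
lemma GZ[simp]: "x \<in> Zn n \<Longrightarrow> G x \<in> Zn n" using G_prop by blast
lemma G_lam: "x \<in> Zn n \<Longrightarrow> y \<in> Zn n \<Longrightarrow> lam (G x) y = lam (q x) (q y)" using G_prop by blast
lemma GL[simp]: "x \<in> Zn n \<Longrightarrow> G x \<in> L"
proof -
  assume x: "x \<in> Zn n"
  have "\<forall>l\<in>L. lam (G x) l = 0" using G_lam[OF x] pq_L x by simp
  then show ?thesis using perp x by simp
qed
lemma G_add: "x \<in> Zn n \<Longrightarrow> y \<in> Zn n \<Longrightarrow> G (x + y) = G x + G y"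
  by (rule G_uniq) (auto simp: G_lam q_add)
lemma G_Lz: "l \<in> L \<Longrightarrow> G l = 0"
  by (rule G_uniq) (auto simp: pq_L)

definition J where "J x = p x - q x + G x"

lemma JZ[simp]: "x \<in> Zn n \<Longrightarrow> J x \<in> Zn n" by (simp add: J_def)
lemma J_L: "l \<in> L \<Longrightarrow> J l = l" by (simp add: J_def pq_L G_Lz)
lemma J_add: "x \<in> Zn n \<Longrightarrow> y \<in> Zn n \<Longrightarrow> J (x + y) = J x + J y"
  by (simp add: J_def p_add q_add G_add algebra_simps)
lemma pq_J: "x \<in> Zn n \<Longrightarrow> p (J x) = p x + G x \<and> q (J x) = - q x"
proof -
  assume x: "x \<in> Zn n"
  have e: "J x = (p x + G x) + (- q x)" by (simp add: J_def algebra_simps)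
  have m: "p x + G x \<in> L" "- q x \<in> K" using x sg_add[OF Lsub] sg_neg[OF Ksub] by auto
  show ?thesis using p_uniq'[OF e m] q_uniq'[OF e m] by simp
qed
lemma G_J: "x \<in> Zn n \<Longrightarrow> G (J x) = - G x"
  by (rule G_uniq) (auto simp: G_lam pq_J)
lemma JJ: "x \<in> Zn n \<Longrightarrow> J (J x) = x"
proof -
  assume x: "x \<in> Zn n"
  have "J (J x) = p (J x) - q (J x) + G (J x)" by (simp add: J_def)
  also have "\<dots> = p x + q x" using pq_J[OF x] G_J[OF x] by simp
  finally show ?thesis using pq_sum[of x] by simp
qed
lemma J_lam: "x \<in> Zn n \<Longrightarrow> y \<in> Zn n \<Longrightarrow> lam (J x) (J y) = - lam x y"
proof -
  assume x: "x \<in> Zn n" and y: "y \<in> Zn n"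
  define a where "a = p x" define k where "k = q x" define g where "g = G x"
  define a' where "a' = p y" define k' where "k' = q y" define g' where "g' = G y"
  have Z: "a \<in> Zn n" "k \<in> Zn n" "g \<in> Zn n" "a' \<in> Zn n" "k' \<in> Zn n" "g' \<in> Zn n"
    using x y by (simp_all add: a_def k_def g_def a'_def k'_def g'_def)
  have LL: "a \<in> L" "g \<in> L" "a' \<in> L" "g' \<in> L" "k \<in> K" "k' \<in> K"
    using x y by (simp_all add: a_def k_def g_def a'_def k'_def g'_def)
  have z: "lam a a' = 0" "lam a g' = 0" "lam g a' = 0" "lam g g' = 0" using LL lamL by auto
  have gk: "lam g k' = lam k k'" unfolding g_def k_def using G_lam[OF x, of k'] Z pq_K LL by (simp add: k_def)
  have kg: "lam k g' = lam k k'"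
  proof -
    have "lam k g' = lam g' k" using sym Z by blast
    also have "\<dots> = lam k' k" unfolding g'_def k'_def using G_lam[OF y, of k] Z pq_K LL by simp
    also have "\<dots> = lam k k'" using sym Z by blast
    finally show ?thesis .
  qed
  have s: "lam k a' = lam a' k" "lam k' a = lam a k'" using sym Z by auto
  have "lam (J x) (J y) = lam (a - k + g) (a' - k' + g')"
    by (simp add: J_def a_def k_def g_def a'_def k'_def g'_def)
  also have "\<dots> = - (lam a k' + lam k a' + lam k k')"
    using Z z gk kg by simp
  also have "lam x y = lam (a + k) (a' + k')"
    unfolding a_def k_def a'_def k'_def by (simp only: pq_sum[symmetric])
  then have "lam x y = lam a k' + lam k a' + lam k k'" using Z z by simp
  ultimately show ?thesis by simp
qed
lemma J_mu: "x \<in> Zn n \<Longrightarrow> mu (J x) = - mu x"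
proof -
  assume x: "x \<in> Zn n"
  have "mu (J x) = mu (p x) - mu (q x) + mu (G x)"
    unfolding J_def using x addf_plus[OF addmu] addf_diff[OF addmu] by simp
  moreover have "mu x = mu (p x) + mu (q x)"
    using addf_plus[OF addmu, of "p x" "q x"] x pq_sum[of x] by simp
  ultimately show ?thesis using muL x by simp
qed

end

theorem mainTheorem9:
  fixes n :: nat
    and lam :: "(nat \<Rightarrow> int) \<Rightarrow> (nat \<Rightarrow> int) \<Rightarrow> int"
    and mu :: "(nat \<Rightarrow> int) \<Rightarrow> 'q::ab_group_add"
    and L :: "(nat \<Rightarrow> int) set"
  assumes "ext_quad_form n lam mu"
    and "metabolic n lam mu"
    and "lagrangian n lam mu L"
  shows "\<exists>J. eqf_iso n lam mu (\<lambda>x y. - lam x y) (\<lambda>x. - mu x) J \<and> (\<forall>x\<in>L. J x = x)"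
proof -
  obtain K where K: "subgroup_of L (Zn n)" "subgroup_of K (Zn n)" "L \<inter> K = {0}"
      "\<forall>x\<in>Zn n. \<exists>l\<in>L. \<exists>k\<in>K. x = l + k"
    using assms(3) unfolding lagrangian_def direct_summand_def by blast
  obtain B where B: "zbasis B L" "2 * card B = n" using assms(3) unfolding lagrangian_def by blast
  interpret mt n lam mu L K B
    using assms K B unfolding ext_quad_form_def metabolic_def lagrangian_def
    by unfold_locales auto
  have "eqf_iso n lam mu (\<lambda>x y. - lam x y) (\<lambda>x. - mu x) J"
    unfolding eqf_iso_def
  proof (intro conjI ballI)
    show "bij_betw J (Zn n) (Zn n)" by (rule bij_betw_byWitness[of _ J]) (auto simp: JJ)
    show "additive_on (Zn n) J" unfolding additive_on_def using J_add by blast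
  qed (simp_all add: J_lam J_mu)
  then show ?thesis using J_L by blast
qed

end
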